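(* For every state $s$ (closed term of type $\mathsf{State}$), the pair $(\Vdash^s_{\mathcal{IR}},\Vdash^s)$ is a monadic realizability relation for the syntactic monad $\mathcal{IR}$; that is, (MR1) if $r\Vdash^s A$ then $\mathsf{unit}\,r\Vdash^s_{\mathcal{IR}}A$; (MR2) if $r\Vdash^s B\to C$ then $\mathsf{star}\,r\,p\Vdash^s_{\mathcal{IR}}C$ for every $p:\|B\|$ with $p\Vdash^s_{\mathcal{IR}}B$; (MR3) if $p\Vdash^s_{\mathcal{IR}}B$ and $q\Vdash^s_{\mathcal{IR}}C$ then $\mathsf{merge}\,p\,q\Vdash^s_{\mathcal{IR}}B\wedge C$ (for all closed formulas $A,B,C$).
   Context: System $T'$: simply typed $\lambda$-calculus with types from atomic types $\mathsf{Unit},\mathsf{Nat},\mathsf{State},\mathsf{Ex}$ (and others) by $\to,\times,+$; constants $\star$, $\langle\cdot,\cdot\rangle$, $\pi_1,\pi_2$, $\mathrm{inl},\mathrm{inr}$, $\mathrm{case}$, $0$, $\mathrm{succ}$, a bounded recursor, and $\mathsf{exmerge}:\mathsf{Ex}\to\mathsf{Ex}\to\mathsf{Ex}$; usual $\beta$, projection and case reductions; $t\leadsto u$: $t$ reduces to $u$; $\bar n$ numerals. States and exceptions: each closed $s:\mathsf{State}$ denotes a finite partial function $[\![s]\!]$ from pairs (a $(k+1)$-ary predicate symbol $P$, a tuple $(m_1,\dots,m_k)\in\mathbb N^k$) to $\mathbb N$ which is sound: $[\![s]\!](P,\vec m)=m$ implies $P(\vec m,m)$. States are ordered by extension $\le$.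 Each closed $e:\mathsf{Ex}$ denotes a partial function $[\![e]\!]$ on states with $s\le[\![e]\!](s)$ whenever defined. $e$ properly extends $s$ iff $[\![e]\!](s)$ is defined and $s<[\![e]\!](s)$. $\mathsf{exmerge}$ satisfies (EX): if $e_1$ and $e_2$ both properly extend $s$ then $\mathsf{exmerge}\,e_1\,e_2$ properly extends $s$. Monad $\mathcal{IR}$: $\mathsf TX=\mathsf{State}\to(X+\mathsf{Ex})$; $\mathsf{unit}=\lambda x\lambda\_.\mathrm{inl}\,x$; $\mathsf{star}=\lambda f\lambda a\lambda s.\mathrm{case}(as)(\lambda x.fxs)\mathrm{inr}$; $\mathsf{merge}=\lambda a\lambda b\lambda s.\mathrm{case}(as)(\lambda x.\mathrm{case}(bs)(\lambda y.\mathrm{inl}\langle x,y\rangle)\mathrm{inr})(\lambda e_1.\mathrm{case}(bs)(\lambda\_.\mathrm{inr}\,e_1)(\lambda e_2.\mathrm{inr}(\mathsf{exmerge}\,e_1e_2)))$. Formulas: first-order arithmetic, decidable atomic predicates, $\bot$ atomic never true. Types: $\|A\|=\mathsf T|A|$, $|P|=\mathsf{Unit}$, $|B\wedge C|=|B|\times|C|$, $|B\vee C|=|B|+|C|$, $|\exists xB|=\mathsf{Nat}\times|B|$, $|B\to C|=|B|\to\|C\|$, $|\forall xB|=\mathsf{Nat}\to\|B\|$. Interactive realizability relations (simultaneous induction on closed $A$): $p\Vdash^s_{\mathcal{IR}}A$ (for $p:\|A\|$) iff either $p\,s\leadsto\mathrm{inl}\,r$ with $r\Vdash^sA$, or $p\,s\leadsto\mathrm{inr}\,e$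 with $e$ properly extending $s$; and $r\Vdash^sP$ iff $r\leadsto\star$ and $P$ true; $r\Vdash^sB\wedge C$ iff $\pi_1r\Vdash^sB$ and $\pi_2r\Vdash^sC$; $r\Vdash^sB\vee C$ iff $r\leadsto\mathrm{inl}\,a$ with $a\Vdash^sB$ or $r\leadsto\mathrm{inr}\,b$ with $b\Vdash^sC$; $r\Vdash^sB\to C$ iff $rp\Vdash^s_{\mathcal{IR}}C$ for all $p\Vdash^sB$; $r\Vdash^s\forall xB$ iff $r\bar n\Vdash^s_{\mathcal{IR}}B[x:=\bar n]$ for all $n$; $r\Vdash^s\exists xB$ iff $\pi_2r\Vdash^sB[x:=\pi_1r]$. *)

theory Defs
  imports Main
begin

datatype ty = TUnit | TNat | TState | TEx | TBase nat
  | TFun ty ty | TProd ty ty | TSum ty ty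

datatype const = CStar | CPair | CFst | CSnd | CInl | CInr | CCase
  | CZero | CSucc | CRec | CExmerge

text \<open>Terms: de Bruijn bound variables (Var), named first-order variables
 (FVar, used only inside formulas, of type Nat), built-in constants (Cst) and
 further typed constants (Ext c, of type cty c), e.g. constants of type State/Ex.\<close>
datatype 'c trm = Var nat | FVar nat | Lam "'c trm" | App "'c trm" "'c trm"
  | Cst const | Ext 'c

inductive ctyp :: "const \<Rightarrow> ty \<Rightarrow> bool" where
  "ctyp CStar TUnit"
| "ctyp CPair (TFun A (TFun B (TProd A B)))"
| "ctyp CFst (TFun (TProd A B) A)"
| "ctyp CSnd (TFun (TProd A B) B)"
| "ctyp CInl (TFun A (TSum A B))"
| "ctyp CInr (TFun B (TSum A B))"
| "ctyp CCase (TFun (TSum A B) (TFun (TFun A C) (TFun (TFun B C) C)))"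
| "ctyp CZero TNat"
| "ctyp CSucc (TFun TNat TNat)"
| "ctyp CRec (TFun A (TFun (TFun TNat (TFun A A)) (TFun TNat A)))"
| "ctyp CExmerge (TFun TEx (TFun TEx TEx))"

inductive typing :: "('c \<Rightarrow> ty) \<Rightarrow> ty list \<Rightarrow> 'c trm \<Rightarrow> ty \<Rightarrow> bool" where
  "i < length \<Gamma> \<Longrightarrow> typing cty \<Gamma> (Var i) (\<Gamma> ! i)"
| "typing cty \<Gamma> (FVar x) TNat"
| "typing cty (A # \<Gamma>) t B \<Longrightarrow> typing cty \<Gamma> (Lam t) (TFun A B)"
| "typing cty \<Gamma> t (TFun A B) \<Longrightarrow> typing cty \<Gamma> u A \<Longrightarrow> typing cty \<Gamma> (App t u) B"
| "ctyp c T \<Longrightarrow> typing cty \<Gamma> (Cst c) T"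
| "typing cty \<Gamma> (Ext c) (cty c)"

fun bclosed :: "nat \<Rightarrow> 'c trm \<Rightarrow> bool" where
  "bclosed k (Var i) = (i < k)"
| "bclosed k (FVar x) = False"
| "bclosed k (Lam t) = bclosed (Suc k) t"
| "bclosed k (App t u) = (bclosed k t \<and> bclosed k u)"
| "bclosed k (Cst c) = True"
| "bclosed k (Ext c) = True"

definition closed :: "'c trm \<Rightarrow> bool" where
  "closed t \<longleftrightarrow> bclosed 0 t"

fun lift :: "nat \<Rightarrow> 'c trm \<Rightarrow> 'c trm" where
  "lift k (Var i) = (if i < k then Var i else Var (Suc i))"
| "lift k (FVar x) = FVar x"
| "lift k (Lam t) = Lam (lift (Suc k) t)"
| "lift k (App t u) = App (lift k t) (lift k u)"
| "lift k (Cst c) = Cst c"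
| "lift k (Ext c) = Ext c"

fun subst :: "'c trm \<Rightarrow> nat \<Rightarrow> 'c trm \<Rightarrow> 'c trm" where
  "subst (Var i) k u = (if i < k then Var i else if i = k then u else Var (i - 1))"
| "subst (FVar x) k u = FVar x"
| "subst (Lam t) k u = Lam (subst t (Suc k) (lift 0 u))"
| "subst (App t v) k u = App (subst t k u) (subst v k u)"
| "subst (Cst c) k u = Cst c"
| "subst (Ext c) k u = Ext c"

abbreviation app2 :: "'c trm \<Rightarrow> 'c trm \<Rightarrow> 'c trm \<Rightarrow> 'c trm" where
  "app2 f a b \<equiv> App (App f a) b"
abbreviation app3 :: "'c trm \<Rightarrow> 'c trm \<Rightarrow> 'c trm \<Rightarrow> 'c trm \<Rightarrow> 'c trm" where
  "app3 f a b c \<equiv> App (App (App f a) b) c"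

inductive red1 :: "'c trm \<Rightarrow> 'c trm \<Rightarrow> bool" where
  beta: "red1 (App (Lam t) u) (subst t 0 u)"
| fst: "red1 (App (Cst CFst) (app2 (Cst CPair) a b)) a"
| snd: "red1 (App (Cst CSnd) (app2 (Cst CPair) a b)) b"
| case_inl: "red1 (app3 (Cst CCase) (App (Cst CInl) a) f g) (App f a)"
| case_inr: "red1 (app3 (Cst CCase) (App (Cst CInr) b) f g) (App g b)"
| rec_0: "red1 (app3 (Cst CRec) u v (Cst CZero)) u"
| rec_S: "red1 (app3 (Cst CRec) u v (App (Cst CSucc) n))
                (app2 v n (app3 (Cst CRec) u v n))"
| appL: "red1 t t' \<Longrightarrow> red1 (App t u) (App t' u)"
| appR: "red1 u u' \<Longrightarrow> red1 (App t u) (App t u')"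
| lam: "red1 t t' \<Longrightarrow> red1 (Lam t) (Lam t')"

definition reduces :: "'c trm \<Rightarrow> 'c trm \<Rightarrow> bool" (infix "\<leadsto>" 50) where
  "t \<leadsto> u \<longleftrightarrow> red1\<^sup>*\<^sup>* t u"

fun numeral_t :: "nat \<Rightarrow> 'c trm" where
  "numeral_t 0 = Cst CZero"
| "numeral_t (Suc n) = App (Cst CSucc) (numeral_t n)"

text \<open>A (k+1)-ary predicate symbol P is identified with its (decidable)
 relation on tuples; a state is a partial function from (P, tuple) to nat.\<close>
type_synonym state = "((nat list \<Rightarrow> bool) \<times> nat list) \<rightharpoonup> nat"

definition is_state :: "state \<Rightarrow> bool" where
  "is_state \<sigma> \<longleftrightarrow> finite (dom \<sigma>) \<and> (\<forall>P ms m. \<sigma> (P, ms) = Some m \<longrightarrow> P (ms @ [m]))"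

definition prop_extends ::
  "('c trm \<Rightarrow> state) \<Rightarrow> ('c trm \<Rightarrow> state \<rightharpoonup> state) \<Rightarrow> 'c trm \<Rightarrow> 'c trm \<Rightarrow> bool" where
  "prop_extends dst dex e s \<longleftrightarrow>
     (\<exists>\<sigma>. dex e (dst s) = Some \<sigma> \<and> dst s \<subseteq>\<^sub>m \<sigma> \<and> dst s \<noteq> \<sigma>)"

text \<open>Atoms carry a decidable relation on nat and a list of T' terms of type Nat;
 falsum is the atom with the always-false relation.\<close>
datatype 'c fm = Atom "nat list \<Rightarrow> bool" "'c trm list"
  | Conj "'c fm" "'c fm" | Disj "'c fm" "'c fm" | Imp "'c fm" "'c fm"
  | Forall nat "'c fm" | Exists nat "'c fm"

definition Falsum :: "'c fm" where "Falsum = Atom (\<lambda>_. False) []"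

fun tsubstfv :: "nat \<Rightarrow> 'c trm \<Rightarrow> 'c trm \<Rightarrow> 'c trm" where
  "tsubstfv x u (Var i) = Var i"
| "tsubstfv x u (FVar y) = (if y = x then u else FVar y)"
| "tsubstfv x u (Lam t) = Lam (tsubstfv x u t)"
| "tsubstfv x u (App t v) = App (tsubstfv x u t) (tsubstfv x u v)"
| "tsubstfv x u (Cst c) = Cst c"
| "tsubstfv x u (Ext c) = Ext c"

text \<open>Substitution B[x := u] (u will always be closed, so no capture).\<close>
fun fsubst :: "nat \<Rightarrow> 'c trm \<Rightarrow> 'c fm \<Rightarrow> 'c fm" where
  "fsubst x u (Atom P ts) = Atom P (map (tsubstfv x u) ts)"
| "fsubst x u (Conj A B) = Conj (fsubst x u A) (fsubst x u B)"
| "fsubst x u (Disj A B) = Disj (fsubst x u A) (fsubst x u B)"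
| "fsubst x u (Imp A B) = Imp (fsubst x u A) (fsubst x u B)"
| "fsubst x u (Forall y A) = (if y = x then Forall y A else Forall y (fsubst x u A))"
| "fsubst x u (Exists y A) = (if y = x then Exists y A else Exists y (fsubst x u A))"

fun tfv :: "'c trm \<Rightarrow> nat set" where
  "tfv (FVar y) = {y}"
| "tfv (Lam t) = tfv t"
| "tfv (App t u) = tfv t \<union> tfv u"
| "tfv _ = {}"

fun ffv :: "'c fm \<Rightarrow> nat set" where
  "ffv (Atom P ts) = (\<Union>t\<in>set ts. tfv t)"
| "ffv (Conj A B) = ffv A \<union> ffv B"
| "ffv (Disj A B) = ffv A \<union> ffv B"
| "ffv (Imp A B) = ffv A \<union> ffv B"
| "ffv (Forall y A) = ffv A - {y}"
| "ffv (Exists y A) = ffv A - {y}"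

definition closed_fm :: "'c fm \<Rightarrow> bool" where
  "closed_fm A \<longleftrightarrow> ffv A = {}"

definition atom_true :: "(nat list \<Rightarrow> bool) \<Rightarrow> 'c trm list \<Rightarrow> bool" where
  "atom_true P ts \<longleftrightarrow> (\<exists>ns. list_all2 (\<lambda>t n. t \<leadsto> numeral_t n) ts ns \<and> P ns)"

fun fsize :: "'c fm \<Rightarrow> nat" where
  "fsize (Atom P ts) = 1"
| "fsize (Conj A B) = Suc (fsize A + fsize B)"
| "fsize (Disj A B) = Suc (fsize A + fsize B)"
| "fsize (Imp A B) = Suc (fsize A + fsize B)"
| "fsize (Forall y A) = Suc (fsize A)"
| "fsize (Exists y A) = Suc (fsize A)"

lemma fsize_fsubst[simp]: "fsize (fsubst x u A) = fsize A"
  by (induction A) auto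

definition TM :: "ty \<Rightarrow> ty" where "TM X = TFun TState (TSum X TEx)"

fun rty :: "'c fm \<Rightarrow> ty" where
  "rty (Atom P ts) = TUnit"
| "rty (Conj A B) = TProd (rty A) (rty B)"
| "rty (Disj A B) = TSum (rty A) (rty B)"
| "rty (Imp A B) = TFun (rty A) (TM (rty B))"
| "rty (Forall y A) = TFun TNat (TM (rty A))"
| "rty (Exists y A) = TProd TNat (rty A)"

definition unitT :: "'c trm" where
  "unitT = Lam (Lam (App (Cst CInl) (Var 1)))"

text \<open>star = \<lambda>f \<lambda>a \<lambda>s. case (a s) (\<lambda>x. f x s) inr\<close>
definition starT :: "'c trm" where
  "starT = Lam (Lam (Lam (app3 (Cst CCase) (App (Var 1) (Var 0))
              (Lam (app2 (Var 3) (Var 0) (Var 1))) (Cst CInr))))"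

text \<open>merge = \<lambda>a \<lambda>b \<lambda>s. case (a s) (\<lambda>x. case (b s) (\<lambda>y. inl \<langle>x,y\<rangle>) inr)
   (\<lambda>e1. case (b s) (\<lambda>_. inr e1) (\<lambda>e2. inr (exmerge e1 e2)))\<close>
definition mergeT :: "'c trm" where
  "mergeT = Lam (Lam (Lam (app3 (Cst CCase) (App (Var 2) (Var 0))
     (Lam (app3 (Cst CCase) (App (Var 2) (Var 1))
              (Lam (App (Cst CInl) (app2 (Cst CPair) (Var 1) (Var 0))))
              (Cst CInr)))
     (Lam (app3 (Cst CCase) (App (Var 2) (Var 1))
              (Lam (App (Cst CInr) (Var 1)))
              (Lam (App (Cst CInr) (app2 (Cst CExmerge) (Var 1) (Var 0)))))))))"

text \<open>real cty dst dex s A r  is  r \<Vdash>^s A ; the clauses for \<rightarrow> and \<forall> contain the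
 unfolded definition of \<Vdash>^s_IR (see realIR below).\<close>
function real :: "('c \<Rightarrow> ty) \<Rightarrow> ('c trm \<Rightarrow> state) \<Rightarrow> ('c trm \<Rightarrow> state \<rightharpoonup> state)
                  \<Rightarrow> 'c trm \<Rightarrow> 'c fm \<Rightarrow> 'c trm \<Rightarrow> bool" where
  "real cty dst dex s (Atom P ts) r = (r \<leadsto> Cst CStar \<and> atom_true P ts)"
| "real cty dst dex s (Conj B C) r =
     (real cty dst dex s B (App (Cst CFst) r) \<and> real cty dst dex s C (App (Cst CSnd) r))"
| "real cty dst dex s (Disj B C) r =
     ((\<exists>a. r \<leadsto> App (Cst CInl) a \<and> real cty dst dex s B a) \<or>
      (\<exists>b. r \<leadsto> App (Cst CInr) b \<and> real cty dst dex s C b))"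
| "real cty dst dex s (Imp B C) r =
     (\<forall>p. closed p \<and> typing cty [] p (rty B) \<and> real cty dst dex s B p \<longrightarrow>
        ((\<exists>r'. App (App r p) s \<leadsto> App (Cst CInl) r' \<and> real cty dst dex s C r') \<or>
         (\<exists>e. App (App r p) s \<leadsto> App (Cst CInr) e \<and> prop_extends dst dex e s)))"
| "real cty dst dex s (Forall x B) r =
     (\<forall>n. (\<exists>r'. App (App r (numeral_t n)) s \<leadsto> App (Cst CInl) r' \<and>
                real cty dst dex s (fsubst x (numeral_t n) B) r') \<or>
          (\<exists>e. App (App r (numeral_t n)) s \<leadsto> App (Cst CInr) e \<and> prop_extends dst dex e s))"
| "real cty dst dex s (Exists x B) r =
     real cty dst dex s (fsubst x (App (Cst CFst) r) B) (App (Cst CSnd) r)"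
  by pat_completeness auto
termination
  by (relation "measure (\<lambda>(cty, dst, dex, s, A, r). fsize A)") auto

definition realIR :: "('c \<Rightarrow> ty) \<Rightarrow> ('c trm \<Rightarrow> state) \<Rightarrow> ('c trm \<Rightarrow> state \<rightharpoonup> state)
                  \<Rightarrow> 'c trm \<Rightarrow> 'c fm \<Rightarrow> 'c trm \<Rightarrow> bool" where
  "realIR cty dst dex s A p \<longleftrightarrow>
     (\<exists>r. App p s \<leadsto> App (Cst CInl) r \<and> real cty dst dex s A r) \<or>
     (\<exists>e. App p s \<leadsto> App (Cst CInr) e \<and> prop_extends dst dex e s)"

end

theory Submission
  imports Defs
begin


lemma bclosed_mono: "bclosed k t \<Longrightarrow> k \<le> j \<Longrightarrow> bclosed j t"
  by (induction t arbitrary: k j) auto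

lemma lift_bclosed: "bclosed k t \<Longrightarrow> k \<le> j \<Longrightarrow> lift j t = t"
  by (induction t arbitrary: k j) auto

lemma subst_bclosed: "bclosed k t \<Longrightarrow> k \<le> j \<Longrightarrow> subst t j u = t"
  by (induction t arbitrary: k j u) auto

lemma closed_lift[simp]: "closed t \<Longrightarrow> lift j t = t"
  unfolding closed_def using lift_bclosed by blast

lemma closed_subst[simp]: "closed t \<Longrightarrow> subst t j u = t"
  unfolding closed_def using subst_bclosed by blast

lemma subst_lift[simp]: "subst (lift k t) k u = t"
  by (induction t arbitrary: k u) auto

lemma bclosed_lift: "bclosed k u \<Longrightarrow> bclosed (Suc k) (lift j u)"
  by (induction u arbitrary: k j) auto

lemma bclosed_subst: "bclosed (Suc k) t \<Longrightarrow> bclosed k u \<Longrightarrow> j \<le> k \<Longrightarrow> bclosed k (subst t j u)"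
  by (induction t arbitrary: k u j) (auto simp: bclosed_lift)

lemma red1_bclosed: "red1 t t' \<Longrightarrow> bclosed k t \<Longrightarrow> bclosed k t'"
  by (induction arbitrary: k rule: red1.induct) (auto simp: bclosed_subst)

lemma red_bclosed: "t \<leadsto> t' \<Longrightarrow> bclosed k t \<Longrightarrow> bclosed k t'"
  unfolding reduces_def by (induction rule: rtranclp_induct) (auto simp: red1_bclosed)

lemma typ_var: "i < length \<Gamma> \<Longrightarrow> \<Gamma> ! i = T \<Longrightarrow> typing cty \<Gamma> (Var i) T"
  using typing.intros(1) by blast

inductive_cases typ_AppE: "typing cty \<Gamma> (App t u) T"
inductive_cases typ_LamE: "typing cty \<Gamma> (Lam t) T"
inductive_cases typ_CstE: "typing cty \<Gamma> (Cst c) T"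
inductive_cases typ_VarE: "typing cty \<Gamma> (Var i) T"
inductive_cases typ_FVarE: "typing cty \<Gamma> (FVar i) T"
inductive_cases typ_ExtE: "typing cty \<Gamma> (Ext i) T"

lemma typing_lift: "typing cty \<Gamma> t T \<Longrightarrow> k \<le> length \<Gamma> \<Longrightarrow>
   typing cty (take k \<Gamma> @ U # drop k \<Gamma>) (lift k t) T"
proof (induction arbitrary: k rule: typing.induct)
  case (1 i \<Gamma> cty)
  then show ?case by (auto intro!: typ_var simp: nth_append min_def)
next
  case (3 cty A \<Gamma> t B)
  then show ?case using typing.intros(3)[of cty A "take k \<Gamma> @ U # drop k \<Gamma>"]
    by (metis Suc_le_mono append_Cons drop_Suc_Cons length_Cons lift.simps(3) take_Suc_Cons)
qed (auto intro: typing.intros)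

lemma typing_subst: "typing cty \<Delta> t T \<Longrightarrow> \<Delta> = take k \<Gamma> @ U # drop k \<Gamma> \<Longrightarrow> k \<le> length \<Gamma> \<Longrightarrow>
   typing cty \<Gamma> u U \<Longrightarrow> typing cty \<Gamma> (subst t k u) T"
proof (induction arbitrary: \<Gamma> k u rule: typing.induct)
  case (1 i \<Delta> cty)
  show ?case
  proof (cases "i < k")
    case True then show ?thesis using 1 by (auto intro!: typ_var simp: nth_append min_def)
  next
    case False
    show ?thesis
    proof (cases "i = k")
      case True then show ?thesis using 1 by (auto simp: nth_append min_def)
    next
      case False2: False
      with False 1 show ?thesis
        by (auto intro!: typ_var simp: nth_append min_def nth_Cons' split: if_splits)
    qed
  qed
next
  case (3 cty A \<Delta> t B)
  have "typing cty (A # \<Gamma>) (lift 0 u) U" using typing_lift[OF 3(5), of 0 A] by simp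
  moreover have "A # \<Delta> = take (Suc k) (A # \<Gamma>) @ U # drop (Suc k) (A # \<Gamma>)" using 3 by simp
  ultimately show ?case using 3 by (auto intro!: typing.intros)
next
  case (4 cty \<Delta> t A B u)
  then show ?case using typing.intros(4) by (metis subst.simps(4))
qed (auto intro: typing.intros)

lemma red1_typing: "red1 t t' \<Longrightarrow> typing cty \<Gamma> t T \<Longrightarrow> typing cty \<Gamma> t' T"
proof (induction arbitrary: \<Gamma> T rule: red1.induct)
  case (beta t u)
  then show ?case
    by (auto elim!: typ_AppE typ_LamE intro: typing_subst[where k=0])
qed (fastforce elim!: typ_AppE typ_CstE typ_LamE simp: ctyp.simps intro: typing.intros ctyp.intros)+

lemma red_typing: "t \<leadsto> t' \<Longrightarrow> typing cty \<Gamma> t T \<Longrightarrow> typing cty \<Gamma> t' T"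
  unfolding reduces_def by (induction rule: rtranclp_induct) (auto simp: red1_typing)



lemma red_refl[intro]: "t \<leadsto> t" unfolding reduces_def by simp
lemma red_trans: "t \<leadsto> u \<Longrightarrow> u \<leadsto> v \<Longrightarrow> t \<leadsto> v" unfolding reduces_def by simp
lemma red_step: "red1 t u \<Longrightarrow> u \<leadsto> v \<Longrightarrow> t \<leadsto> v"
  unfolding reduces_def by (simp add: converse_rtranclp_into_rtranclp)
lemma red_appL: "t \<leadsto> t' \<Longrightarrow> App t u \<leadsto> App t' u"
  unfolding reduces_def by (induction rule: rtranclp_induct) (auto intro: rtranclp.rtrancl_into_rtrancl red1.appL)
lemma red_appR: "u \<leadsto> u' \<Longrightarrow> App t u \<leadsto> App t u'"
  unfolding reduces_def by (induction rule: rtranclp_induct) (auto intro: rtranclp.rtrancl_into_rtrancl red1.appR)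
lemma red_lam: "t \<leadsto> t' \<Longrightarrow> Lam t \<leadsto> Lam t'"
  unfolding reduces_def by (induction rule: rtranclp_induct) (auto intro: rtranclp.rtrancl_into_rtrancl red1.lam)
lemma red_app: "t \<leadsto> t' \<Longrightarrow> u \<leadsto> u' \<Longrightarrow> App t u \<leadsto> App t' u'"
  using red_appL red_appR red_trans by blast

inductive mk :: "'c trm \<Rightarrow> 'c trm \<Rightarrow> bool" where
  mVar: "mk (Var i) (Var i)"
| mFVar: "mk (FVar i) (FVar i)"
| mCst: "mk (Cst c) (Cst c)"
| mExt: "mk (Ext c) (Ext c)"
| mLam: "mk t t' \<Longrightarrow> mk (Lam t) (Lam t')"
| mApp: "mk t t' \<Longrightarrow> mk u u' \<Longrightarrow> mk (App t u) (App t' u')"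
| mFst: "mk a a' \<Longrightarrow> mk (App (Cst CFst) (app2 (Cst CPair) a b)) a'"
| mSnd: "mk b b' \<Longrightarrow> mk (App (Cst CSnd) (app2 (Cst CPair) a b)) b'"

lemma mk_refl[intro]: "mk t t"
  by (induction t) (auto intro: mk.intros)

lemma mk_red: "mk t t' \<Longrightarrow> t \<leadsto> t'"
proof (induction rule: mk.induct)
  case (mFst a a' b) then show ?case by (meson red1.fst red_step)
next
  case (mSnd b b' a) then show ?case by (meson red1.snd red_step)
qed (auto intro: red_lam red_app)

lemma mk_lift: "mk t t' \<Longrightarrow> mk (lift k t) (lift k t')"
  by (induction arbitrary: k rule: mk.induct) (auto intro: mk.intros)

lemma mk_subst: "mk t t' \<Longrightarrow> mk u u' \<Longrightarrow> mk (subst t k u) (subst t' k u')"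
proof (induction arbitrary: k u u' rule: mk.induct)
  case (mLam t t') then show ?case by (simp add: mk.mLam mk_lift)
qed (auto intro: mk.intros)

lemma mk_tsubstfv: "mk t t' \<Longrightarrow> mk u u' \<Longrightarrow> mk (tsubstfv x u t) (tsubstfv x u' t')"
  by (induction rule: mk.induct) (auto intro: mk.intros)

inductive_cases mkE_App: "mk (App t u) z"
inductive_cases mkE_Cst: "mk (Cst c) z"
inductive_cases mkE_Lam: "mk (Lam t) z"
inductive_cases red1E_App: "red1 (App t u) z"
inductive_cases red1E_Cst: "red1 (Cst c) z"

lemma mk_Cst_iff[simp]: "mk (Cst c) z \<longleftrightarrow> z = Cst c"
  by (auto elim: mkE_Cst intro: mk.intros)
lemma red1_Cst[simp]: "\<not> red1 (Cst c) z"
  by (auto elim: red1E_Cst)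

lemma mk_App_inv: "mk (App t u) z \<Longrightarrow> (\<exists>t1 u1. z = App t1 u1 \<and> mk t t1 \<and> mk u u1) \<or>
   (\<exists>a b. t = Cst CFst \<and> u = app2 (Cst CPair) a b \<and> mk a z) \<or>
   (\<exists>a b. t = Cst CSnd \<and> u = app2 (Cst CPair) a b \<and> mk b z)"
  by (auto elim: mkE_App)

lemma mk_noproj: "mk (App t u) z \<Longrightarrow> t \<noteq> Cst CFst \<Longrightarrow> t \<noteq> Cst CSnd \<Longrightarrow>
   \<exists>t1 u1. z = App t1 u1 \<and> mk t t1 \<and> mk u u1"
  using mk_App_inv by blast

lemma mk_Pair: "mk (app2 (Cst CPair) a b) z \<Longrightarrow> \<exists>a' b'. z = app2 (Cst CPair) a' b' \<and> mk a a' \<and> mk b b'"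
  by (auto dest!: mk_noproj)

lemma red1_Pair: "red1 (app2 (Cst CPair) a b) z \<Longrightarrow>
   (\<exists>a'. z = app2 (Cst CPair) a' b \<and> red1 a a') \<or> (\<exists>b'. z = app2 (Cst CPair) a b' \<and> red1 b b')"
  by (auto elim!: red1E_App)

lemma red_Pair: "app2 (Cst CPair) a b \<leadsto> z \<Longrightarrow> \<exists>a' b'. z = app2 (Cst CPair) a' b' \<and> a \<leadsto> a' \<and> b \<leadsto> b'"
  unfolding reduces_def
proof (induction rule: rtranclp_induct)
  case (step y z)
  then show ?case using red1_Pair by (metis rtranclp.rtrancl_into_rtrancl)
qed auto

lemma sim1: "red1 t u \<Longrightarrow> mk t t' \<Longrightarrow> \<exists>u'. t' \<leadsto> u' \<and> mk u u'"
proof (induction arbitrary: t' rule: red1.induct)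
  case (beta t u)
  then show ?case
    by (auto dest!: mk_noproj elim!: mkE_Lam intro!: red_step[OF red1.beta] mk_subst)
next
  case (fst a b)
  from mk_App_inv[OF fst] show ?case
  proof (elim disjE exE conjE)
    fix t1 u1 assume 1: "t' = App t1 u1" "mk (Cst CFst) t1" "mk (app2 (Cst CPair) a b) u1"
    then obtain a' b' where "u1 = app2 (Cst CPair) a' b'" "mk a a'" using mk_Pair by blast
    then show ?thesis using 1 by (metis mk_Cst_iff red1.fst red_step red_refl)
  next
    fix a2 b2 assume h: "Cst CFst = Cst CFst" "app2 (Cst CPair) a b = app2 (Cst CPair) a2 b2" "mk a2 t'"
    show ?thesis using h by (intro exI[of _ t'] conjI red_refl) simp_all
  next
    fix a2 b2 assume h: "Cst CFst = Cst CSnd" "app2 (Cst CPair) a b = app2 (Cst CPair) a2 b2" "mk b2 t'"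
    show ?thesis using h by simp
  qed
next
  case (snd a b)
  from mk_App_inv[OF snd] show ?case
  proof (elim disjE exE conjE)
    fix t1 u1 assume 1: "t' = App t1 u1" "mk (Cst CSnd) t1" "mk (app2 (Cst CPair) a b) u1"
    then obtain a' b' where "u1 = app2 (Cst CPair) a' b'" "mk b b'" using mk_Pair by blast
    then show ?thesis using 1 by (metis mk_Cst_iff red1.snd red_step red_refl)
  next
    fix a2 b2 assume h: "Cst CSnd = Cst CFst" "app2 (Cst CPair) a b = app2 (Cst CPair) a2 b2" "mk a2 t'"
    show ?thesis using h by simp
  next
    fix a2 b2 assume h: "Cst CSnd = Cst CSnd" "app2 (Cst CPair) a b = app2 (Cst CPair) a2 b2" "mk b2 t'"
    show ?thesis using h by (intro exI[of _ t'] conjI red_refl) simp_all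
  qed
next
  case (case_inl a f g)
  then obtain a' f' g' where "t' = app3 (Cst CCase) (App (Cst CInl) a') f' g'" "mk a a'" "mk f f'" "mk g g'"
    by (auto dest!: mk_noproj)
  then show ?case by (meson red1.case_inl red_step red_refl mk.intros)
next
  case (case_inr a f g)
  then obtain a' f' g' where "t' = app3 (Cst CCase) (App (Cst CInr) a') f' g'" "mk a a'" "mk f f'" "mk g g'"
    by (auto dest!: mk_noproj)
  then show ?case by (meson red1.case_inr red_step red_refl mk.intros)
next
  case (rec_0 u v)
  then obtain u' v' where "t' = app3 (Cst CRec) u' v' (Cst CZero)" "mk u u'"
    by (auto dest!: mk_noproj)
  then show ?case by (meson red1.rec_0 red_step red_refl mk.intros)
next
  case (rec_S u v n)
  then obtain u' v' n' where h: "t' = app3 (Cst CRec) u' v' (App (Cst CSucc) n')" "mk u u'" "mk v v'" "mk n n'"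
    by (auto dest!: mk_noproj)
  then show ?case unfolding h(1)
    by (intro exI[of _ "app2 v' n' (app3 (Cst CRec) u' v' n')"] conjI red_step[OF red1.rec_S] red_refl)
       (simp_all add: mk.mApp mk.mCst)
next
  case (appL t t2 u)
  from mk_App_inv[OF appL.prems] show ?case
  proof (elim disjE exE conjE)
    fix t1 u1 assume 1: "t' = App t1 u1" "mk t t1" "mk u u1"
    then obtain v where "t1 \<leadsto> v" "mk t2 v" using appL.IH 1 by blast
    then show ?thesis using 1 by (auto intro!: red_appL mk.intros)
  next
    fix a b assume "t = Cst CFst" then show ?thesis using appL.hyps by simp
  next
    fix a b assume "t = Cst CSnd" then show ?thesis using appL.hyps by simp
  qed
next
  case (appR u u' t)
  from mk_App_inv[OF appR.prems] show ?case
  proof (elim disjE exE conjE)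
    fix t1 u1 assume 1: "t' = App t1 u1" "mk t t1" "mk u u1"
    then obtain v where "u1 \<leadsto> v" "mk u' v" using appR.IH by blast
    then show ?thesis using 1 by (auto intro!: red_appR mk.intros)
  next
    fix a b assume 2: "t = Cst CFst" "u = app2 (Cst CPair) a b" "mk a t'"
    have "mk u (app2 (Cst CPair) t' b)" using 2 by (auto intro: mk.intros)
    then obtain v where v: "app2 (Cst CPair) t' b \<leadsto> v" "mk u' v" using appR.IH by blast
    from red_Pair[OF v(1)] obtain a2 b2 where ab: "v = app2 (Cst CPair) a2 b2" "t' \<leadsto> a2" by blast
    from red1_Pair appR.hyps 2 obtain a1 b1 where u': "u' = app2 (Cst CPair) a1 b1" by blast
    have "mk a1 a2" using mk_Pair[of a1 b1 v] v(2) ab(1) u' by auto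
    then show ?thesis unfolding 2(1) u' using ab(2) by (intro exI[of _ "a2"] conjI) (auto intro: mk.mFst)
  next
    fix a b assume 3: "t = Cst CSnd" "u = app2 (Cst CPair) a b" "mk b t'"
    have "mk u (app2 (Cst CPair) a t')" using 3 by (auto intro: mk.intros)
    then obtain v where v: "app2 (Cst CPair) a t' \<leadsto> v" "mk u' v" using appR.IH by blast
    from red_Pair[OF v(1)] obtain a2 b2 where ab: "v = app2 (Cst CPair) a2 b2" "t' \<leadsto> b2" by blast
    from red1_Pair appR.hyps 3 obtain a1 b1 where u': "u' = app2 (Cst CPair) a1 b1" by blast
    have "mk b1 b2" using mk_Pair[of a1 b1 v] v(2) ab(1) u' by auto
    then show ?thesis unfolding 3(1) u' using ab(2) by (intro exI[of _ "b2"] conjI) (auto intro: mk.mSnd)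
  qed
next
  case (lam t t')
  then show ?case by (auto elim!: mkE_Lam intro: red_lam mk.intros)
qed

lemma sim: "t \<leadsto> u \<Longrightarrow> mk t t' \<Longrightarrow> \<exists>u'. t' \<leadsto> u' \<and> mk u u'"
  unfolding reduces_def
proof (induction arbitrary: t' rule: rtranclp_induct)
  case base then show ?case by auto
next
  case (step y z)
  then obtain y' where "red1\<^sup>*\<^sup>* t' y'" "mk y y'" by blast
  with sim1[OF step(2)] show ?case unfolding reduces_def by (meson rtranclp_trans)
qed

lemma mk_numeral: "mk (numeral_t n) z \<Longrightarrow> z = numeral_t n"
  by (induction n arbitrary: z) (auto dest!: mk_noproj)



inductive fr :: "'c fm \<Rightarrow> 'c fm \<Rightarrow> bool" where
  "list_all2 mk ts' ts \<Longrightarrow> fr (Atom P ts') (Atom P ts)"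
| "fr A A' \<Longrightarrow> fr B B' \<Longrightarrow> fr (Conj A B) (Conj A' B')"
| "fr A A' \<Longrightarrow> fr B B' \<Longrightarrow> fr (Disj A B) (Disj A' B')"
| "fr A A' \<Longrightarrow> fr B B' \<Longrightarrow> fr (Imp A B) (Imp A' B')"
| "fr A A' \<Longrightarrow> fr (Forall v A) (Forall v A')"
| "fr A A' \<Longrightarrow> fr (Exists v A) (Exists v A')"

lemma fr_refl: "fr A A"
proof (induction A)
  case (Atom P ts) show ?case by (intro fr.intros) (simp add: list_all2_refl mk_refl)
qed (auto intro: fr.intros)

lemma fr_rty: "fr A' A \<Longrightarrow> rty A' = rty A"
  by (induction rule: fr.induct) auto

lemma fr_size: "fr A' A \<Longrightarrow> fsize A' = fsize A"
  by (induction rule: fr.induct) auto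

lemma fr_fsubst: "fr A' A \<Longrightarrow> mk u' u \<Longrightarrow> fr (fsubst v u' A') (fsubst v u A)"
proof (induction rule: fr.induct)
  case (1 ts' ts P)
  then show ?case
    by (auto intro!: fr.intros mk_tsubstfv simp: list_all2_conv_all_nth)
qed (auto intro: fr.intros)

lemma atom_fw: "list_all2 mk ts' ts \<Longrightarrow> atom_true P ts' \<Longrightarrow> atom_true P ts"
proof -
  assume m: "list_all2 mk ts' ts" and a: "atom_true P ts'"
  then obtain ns where ns: "list_all2 (\<lambda>t n. t \<leadsto> numeral_t n) ts' ns" "P ns"
    unfolding atom_true_def by blast
  have "list_all2 (\<lambda>t n. t \<leadsto> numeral_t n) ts ns"
    unfolding list_all2_conv_all_nth
  proof (intro conjI allI impI)
    show "length ts = length ns" using m ns(1) by (simp add: list_all2_conv_all_nth)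
    fix i assume i: "i < length ts"
    have "mk (ts' ! i) (ts ! i)" "ts' ! i \<leadsto> numeral_t (ns ! i)"
      using m ns(1) i by (auto simp: list_all2_conv_all_nth)
    then show "ts ! i \<leadsto> numeral_t (ns ! i)" using sim mk_numeral by metis
  qed
  then show ?thesis using ns(2) unfolding atom_true_def by blast
qed

lemma atom_bw: "list_all2 mk ts' ts \<Longrightarrow> atom_true P ts \<Longrightarrow> atom_true P ts'"
proof -
  assume m: "list_all2 mk ts' ts" and a: "atom_true P ts"
  then obtain ns where ns: "list_all2 (\<lambda>t n. t \<leadsto> numeral_t n) ts ns" "P ns"
    unfolding atom_true_def by blast
  have "list_all2 (\<lambda>t n. t \<leadsto> numeral_t n) ts' ns"
    using m ns(1) mk_red red_trans by (fastforce simp: list_all2_conv_all_nth)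
  then show ?thesis using ns(2) unfolding atom_true_def by blast
qed

lemma real_fr:
  "fr A' A \<Longrightarrow>
   (\<forall>t x. mk t x \<longrightarrow> real cty dst dex s A x \<longrightarrow> real cty dst dex s A' t) \<and>
   (\<forall>p. real cty dst dex s A' p \<longrightarrow> real cty dst dex s A p)"
proof (induction "fsize A" arbitrary: A A' rule: less_induct)
  case less
  from less.prems show ?case
  proof (cases rule: fr.cases)
    case (1 ts' ts P)
    then show ?thesis using atom_fw atom_bw by (auto intro: red_trans[OF mk_red])
  next
    case (2 B B1 C C1)
    have IB: "(\<forall>t x. mk t x \<longrightarrow> real cty dst dex s B1 x \<longrightarrow> real cty dst dex s B t) \<and>
       (\<forall>p. real cty dst dex s B p \<longrightarrow> real cty dst dex s B1 p)"
      using less.hyps[of B1 B] 2 by simp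
    have IC: "(\<forall>t x. mk t x \<longrightarrow> real cty dst dex s C1 x \<longrightarrow> real cty dst dex s C t) \<and>
       (\<forall>p. real cty dst dex s C p \<longrightarrow> real cty dst dex s C1 p)"
      using less.hyps[of C1 C] 2 by simp
    show ?thesis using IB IC 2 mk.mApp[OF mk.mCst] by simp blast
  next
    case (3 B B1 C C1)
    have IB: "(\<forall>t x. mk t x \<longrightarrow> real cty dst dex s B1 x \<longrightarrow> real cty dst dex s B t) \<and>
       (\<forall>p. real cty dst dex s B p \<longrightarrow> real cty dst dex s B1 p)"
      using less.hyps[of B1 B] 3 by simp
    have IC: "(\<forall>t x. mk t x \<longrightarrow> real cty dst dex s C1 x \<longrightarrow> real cty dst dex s C t) \<and>
       (\<forall>p. real cty dst dex s C p \<longrightarrow> real cty dst dex s C1 p)"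
      using less.hyps[of C1 C] 3 by simp
    show ?thesis using IB IC 3 by simp (meson mk_refl mk_red red_trans)
  next
    case (4 B B1 C C1)
    have IB: "(\<forall>t x. mk t x \<longrightarrow> real cty dst dex s B1 x \<longrightarrow> real cty dst dex s B t) \<and>
       (\<forall>p. real cty dst dex s B p \<longrightarrow> real cty dst dex s B1 p)"
      using less.hyps[of B1 B] 4 by simp
    have IC: "(\<forall>t x. mk t x \<longrightarrow> real cty dst dex s C1 x \<longrightarrow> real cty dst dex s C t) \<and>
       (\<forall>p. real cty dst dex s C p \<longrightarrow> real cty dst dex s C1 p)"
      using less.hyps[of C1 C] 4 by simp
    have rt: "rty B = rty B1" using 4 fr_rty by blast
    have d1: "real cty dst dex s A' t" if "mk t x" "real cty dst dex s A x" for t x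
    proof -
      have tx: "t \<leadsto> x" using mk_red that(1) .
      show ?thesis unfolding 4 real.simps
      proof (intro allI impI)
        fix p assume p: "closed p \<and> typing cty [] p (rty B) \<and> real cty dst dex s B p"
        then have "closed p \<and> typing cty [] p (rty B1) \<and> real cty dst dex s B1 p" using IB rt by simp
        with that(2) have h: "(\<exists>r'. App (App x p) s \<leadsto> App (Cst CInl) r' \<and> real cty dst dex s C1 r') \<or>
         (\<exists>e. App (App x p) s \<leadsto> App (Cst CInr) e \<and> prop_extends dst dex e s)"
          unfolding 4 real.simps by blast
        have tr: "App (App t p) s \<leadsto> App (App x p) s" using tx by (intro red_appL)
        from h show "(\<exists>r'. App (App t p) s \<leadsto> App (Cst CInl) r' \<and> real cty dst dex s C r') \<or>
         (\<exists>e. App (App t p) s \<leadsto> App (Cst CInr) e \<and> prop_extends dst dex e s)"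
          using tr IC red_trans mk_refl by meson
      qed
    qed
    have d2: "real cty dst dex s A p" if "real cty dst dex s A' p" for p
    proof -
      show ?thesis unfolding 4 real.simps
      proof (intro allI impI)
        fix q assume q: "closed q \<and> typing cty [] q (rty B1) \<and> real cty dst dex s B1 q"
        have "real cty dst dex s B q" using conjunct1[OF IB] mk_refl[of q] q by blast
        then have "closed q \<and> typing cty [] q (rty B) \<and> real cty dst dex s B q" using rt q by simp
        with that have h: "(\<exists>r'. App (App p q) s \<leadsto> App (Cst CInl) r' \<and> real cty dst dex s C r') \<or>
         (\<exists>e. App (App p q) s \<leadsto> App (Cst CInr) e \<and> prop_extends dst dex e s)"
          unfolding 4 real.simps by blast
        then show "(\<exists>r'. App (App p q) s \<leadsto> App (Cst CInl) r' \<and> real cty dst dex s C1 r') \<or>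
         (\<exists>e. App (App p q) s \<leadsto> App (Cst CInr) e \<and> prop_extends dst dex e s)"
          using IC by blast
      qed
    qed
    show ?thesis using d1 d2 by blast
  next
    case (5 B B1 v)
    have I: "(\<forall>t x. mk t x \<longrightarrow> real cty dst dex s (fsubst v (numeral_t n) B1) x \<longrightarrow>
                     real cty dst dex s (fsubst v (numeral_t n) B) t) \<and>
       (\<forall>p. real cty dst dex s (fsubst v (numeral_t n) B) p \<longrightarrow> real cty dst dex s (fsubst v (numeral_t n) B1) p)" for n
      using less.hyps[of "fsubst v (numeral_t n) B1" "fsubst v (numeral_t n) B"] 5 fr_fsubst[OF 5(3) mk_refl] by simp
    have d1: "real cty dst dex s A' t" if "mk t x" "real cty dst dex s A x" for t x
    proof -
      have tx: "t \<leadsto> x" using mk_red that(1) .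
      show ?thesis unfolding 5 real.simps
      proof (intro allI)
        fix n
        from that(2) have h: "(\<exists>r'. App (App x (numeral_t n)) s \<leadsto> App (Cst CInl) r' \<and> real cty dst dex s (fsubst v (numeral_t n) B1) r') \<or>
         (\<exists>e. App (App x (numeral_t n)) s \<leadsto> App (Cst CInr) e \<and> prop_extends dst dex e s)"
          unfolding 5 real.simps by blast
        have tr: "App (App t (numeral_t n)) s \<leadsto> App (App x (numeral_t n)) s" using tx by (intro red_appL)
        from h show "(\<exists>r'. App (App t (numeral_t n)) s \<leadsto> App (Cst CInl) r' \<and> real cty dst dex s (fsubst v (numeral_t n) B) r') \<or>
         (\<exists>e. App (App t (numeral_t n)) s \<leadsto> App (Cst CInr) e \<and> prop_extends dst dex e s)"
          using tr I red_trans mk_refl by meson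
      qed
    qed
    have d2: "real cty dst dex s A p" if "real cty dst dex s A' p" for p
      using that I unfolding 5 real.simps by blast
    show ?thesis using d1 d2 by blast
  next
    case (6 B B1 v)
    have I: "(\<forall>t x. mk t x \<longrightarrow> real cty dst dex s (fsubst v u B1) x \<longrightarrow>
                     real cty dst dex s (fsubst v u' B) t) \<and>
       (\<forall>p. real cty dst dex s (fsubst v u' B) p \<longrightarrow> real cty dst dex s (fsubst v u B1) p)" if "mk u' u" for u u'
      using less.hyps[of "fsubst v u B1" "fsubst v u' B"] 6 fr_fsubst[OF 6(3) that] by simp
    have d1: "real cty dst dex s A' t" if "mk t x" "real cty dst dex s A x" for t x
    proof -
      have "mk (App (Cst CFst) t) (App (Cst CFst) x)" "mk (App (Cst CSnd) t) (App (Cst CSnd) x)"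
        using that(1) by (auto intro: mk.intros)
      then show ?thesis using that(2) I unfolding 6 real.simps by blast
    qed
    have d2: "real cty dst dex s A p" if "real cty dst dex s A' p" for p
      using that I[OF mk_refl] unfolding 6 real.simps by blast
    show ?thesis using d1 d2 by blast
  qed
qed



lemma unit_red: "closed r \<Longrightarrow> App (App unitT r) s \<leadsto> App (Cst CInl) r"
  unfolding unitT_def
  apply (rule red_step[OF red1.appL[OF red1.beta]])
  apply simp
  apply (rule red_step[OF red1.beta])
  apply (simp add: red_refl)
  done

lemma star_red: "closed r \<Longrightarrow> closed p \<Longrightarrow> closed s \<Longrightarrow>
  App (app2 starT r p) s \<leadsto> app3 (Cst CCase) (App p s) (Lam (app2 r (Var 0) s)) (Cst CInr)"
  unfolding starT_def
  apply (rule red_step[OF red1.appL[OF red1.appL[OF red1.beta]]])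
  apply simp
  apply (rule red_step[OF red1.appL[OF red1.beta]])
  apply simp
  apply (rule red_step[OF red1.beta])
  apply (simp add: red_refl)
  done

lemma merge_red: "closed p \<Longrightarrow> closed q \<Longrightarrow> closed s \<Longrightarrow>
  App (app2 mergeT p q) s \<leadsto> app3 (Cst CCase) (App p s)
     (Lam (app3 (Cst CCase) (App q s)
              (Lam (App (Cst CInl) (app2 (Cst CPair) (Var 1) (Var 0))))
              (Cst CInr)))
     (Lam (app3 (Cst CCase) (App q s)
              (Lam (App (Cst CInr) (Var 1)))
              (Lam (App (Cst CInr) (app2 (Cst CExmerge) (Var 1) (Var 0))))))"
  unfolding mergeT_def
  apply (rule red_step[OF red1.appL[OF red1.appL[OF red1.beta]]])
  apply simp
  apply (rule red_step[OF red1.appL[OF red1.beta]])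
  apply simp
  apply (rule red_step[OF red1.beta])
  apply (simp add: red_refl)
  done

lemma case_red: "a \<leadsto> a' \<Longrightarrow> app3 (Cst CCase) a f g \<leadsto> app3 (Cst CCase) a' f g"
  by (intro red_appL red_appR)

lemma inl_typ: "typing cty \<Gamma> (App (Cst CInl) x) (TSum A B) \<Longrightarrow> typing cty \<Gamma> x A"
  by (auto elim!: typ_AppE typ_CstE simp: ctyp.simps)
lemma inr_typ: "typing cty \<Gamma> (App (Cst CInr) x) (TSum A B) \<Longrightarrow> typing cty \<Gamma> x B"
  by (auto elim!: typ_AppE typ_CstE simp: ctyp.simps)

lemma res_props:
  assumes "closed p" "typing cty [] p (TM X)" "closed s" "typing cty [] s TState"
  shows "App p s \<leadsto> App (Cst CInl) x \<Longrightarrow> closed x \<and> typing cty [] x X"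
    and "App p s \<leadsto> App (Cst CInr) e \<Longrightarrow> closed e \<and> typing cty [] e TEx"
proof -
  have ty: "typing cty [] (App p s) (TSum X TEx)"
    using assms typing.intros(4) unfolding TM_def by blast
  have cl: "bclosed 0 (App p s)" using assms unfolding closed_def by simp
  show "App p s \<leadsto> App (Cst CInl) x \<Longrightarrow> closed x \<and> typing cty [] x X"
    using red_typing[OF _ ty] red_bclosed[OF _ cl] inl_typ unfolding closed_def by fastforce
  show "App p s \<leadsto> App (Cst CInr) e \<Longrightarrow> closed e \<and> typing cty [] e TEx"
    using red_typing[OF _ ty] red_bclosed[OF _ cl] inr_typ unfolding closed_def by fastforce
qed



theorem mainTheorem4:
  fixes cty :: "'c \<Rightarrow> ty"
    and dst :: "'c trm \<Rightarrow> state"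
    and dex :: "'c trm \<Rightarrow> state \<rightharpoonup> state"
  assumes states_sound:
      "\<forall>s. closed s \<and> typing cty [] s TState \<longrightarrow> is_state (dst s)"
    and exceptions_extend:
      "\<forall>e \<sigma> \<sigma>'. closed e \<and> typing cty [] e TEx \<and> is_state \<sigma> \<and> dex e \<sigma> = Some \<sigma>'
                 \<longrightarrow> is_state \<sigma>' \<and> \<sigma> \<subseteq>\<^sub>m \<sigma>'"
    and EX:
      "\<forall>s e1 e2. closed s \<and> typing cty [] s TState \<and>
                 closed e1 \<and> typing cty [] e1 TEx \<and> closed e2 \<and> typing cty [] e2 TEx \<and>
                 prop_extends dst dex e1 s \<and> prop_extends dst dex e2 s
                 \<longrightarrow> prop_extends dst dex (app2 (Cst CExmerge) e1 e2) s"
  shows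
    "\<forall>s. closed s \<and> typing cty [] s TState \<longrightarrow>
       (\<forall>A r. closed_fm A \<and> closed r \<and> typing cty [] r (rty A) \<and>
              real cty dst dex s A r
              \<longrightarrow> realIR cty dst dex s A (App unitT r)) \<and>
       (\<forall>B C r p. closed_fm B \<and> closed_fm C \<and>
              closed r \<and> typing cty [] r (rty (Imp B C)) \<and>
              closed p \<and> typing cty [] p (TM (rty B)) \<and>
              real cty dst dex s (Imp B C) r \<and> realIR cty dst dex s B p
              \<longrightarrow> realIR cty dst dex s C (app2 starT r p)) \<and>
       (\<forall>B C p q. closed_fm B \<and> closed_fm C \<and>
              closed p \<and> typing cty [] p (TM (rty B)) \<and>
              closed q \<and> typing cty [] q (TM (rty C)) \<and>
              realIR cty dst dex s B p \<and> realIR cty dst dex s C q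
              \<longrightarrow> realIR cty dst dex s (Conj B C) (app2 mergeT p q))"

proof (rule allI, rule impI, intro conjI)
  fix s assume s: "closed s \<and> typing cty [] s TState"
  show "\<forall>A r. closed_fm A \<and> closed r \<and> typing cty [] r (rty A) \<and> real cty dst dex s A r
              \<longrightarrow> realIR cty dst dex s A (App unitT r)"
    unfolding realIR_def using unit_red by blast
  show "\<forall>B C r p. closed_fm B \<and> closed_fm C \<and>
              closed r \<and> typing cty [] r (rty (Imp B C)) \<and>
              closed p \<and> typing cty [] p (TM (rty B)) \<and>
              real cty dst dex s (Imp B C) r \<and> realIR cty dst dex s B p
              \<longrightarrow> realIR cty dst dex s C (app2 starT r p)"
  proof (intro allI impI)
    fix B C r p
    assume h: "closed_fm B \<and> closed_fm C \<and>
              closed r \<and> typing cty [] r (rty (Imp B C)) \<and>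
              closed p \<and> typing cty [] p (TM (rty B)) \<and>
              real cty dst dex s (Imp B C) r \<and> realIR cty dst dex s B p"
    have st: "App (app2 starT r p) s \<leadsto> app3 (Cst CCase) (App p s) (Lam (app2 r (Var 0) s)) (Cst CInr)"
      using star_red h s by blast
    from h have "realIR cty dst dex s B p" by blast
    then show "realIR cty dst dex s C (app2 starT r p)"
      unfolding realIR_def
    proof (elim disjE exE conjE)
      fix x assume px: "App p s \<leadsto> App (Cst CInl) x" and rx: "real cty dst dex s B x"
      have xc: "closed x \<and> typing cty [] x (rty B)" using res_props(1)[OF _ _ _ _ px] h s by blast
      have r1: "App (app2 starT r p) s \<leadsto> app2 r x s"
        apply (rule red_trans[OF st])
        apply (rule red_trans[OF case_red[OF px]])
        apply (rule red_step[OF red1.case_inl])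
        apply (rule red_step[OF red1.beta])
        using h s xc by (simp add: red_refl)
      from h xc rx have "(\<exists>r'. App (App r x) s \<leadsto> App (Cst CInl) r' \<and> real cty dst dex s C r') \<or>
         (\<exists>e. App (App r x) s \<leadsto> App (Cst CInr) e \<and> prop_extends dst dex e s)"
        by simp
      then show "(\<exists>r'. App (app2 starT r p) s \<leadsto> App (Cst CInl) r' \<and> real cty dst dex s C r') \<or>
         (\<exists>e. App (app2 starT r p) s \<leadsto> App (Cst CInr) e \<and> prop_extends dst dex e s)"
        using r1 red_trans by blast
    next
      fix e assume pe: "App p s \<leadsto> App (Cst CInr) e" and ex: "prop_extends dst dex e s"
      have r1: "App (app2 starT r p) s \<leadsto> App (Cst CInr) e"
        apply (rule red_trans[OF st])
        apply (rule red_trans[OF case_red[OF pe]])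
        apply (rule red_step[OF red1.case_inr])
        by (simp add: red_refl)
      then show "(\<exists>r'. App (app2 starT r p) s \<leadsto> App (Cst CInl) r' \<and> real cty dst dex s C r') \<or>
         (\<exists>e. App (app2 starT r p) s \<leadsto> App (Cst CInr) e \<and> prop_extends dst dex e s)"
        using ex by blast
    qed
  qed
  show "\<forall>B C p q. closed_fm B \<and> closed_fm C \<and>
              closed p \<and> typing cty [] p (TM (rty B)) \<and>
              closed q \<and> typing cty [] q (TM (rty C)) \<and>
              realIR cty dst dex s B p \<and> realIR cty dst dex s C q
              \<longrightarrow> realIR cty dst dex s (Conj B C) (app2 mergeT p q)"
  proof (intro allI impI)
    fix B C p q
    assume h: "closed_fm B \<and> closed_fm C \<and>
              closed p \<and> typing cty [] p (TM (rty B)) \<and>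
              closed q \<and> typing cty [] q (TM (rty C)) \<and>
              realIR cty dst dex s B p \<and> realIR cty dst dex s C q"
    have st: "App (app2 mergeT p q) s \<leadsto> app3 (Cst CCase) (App p s)
     (Lam (app3 (Cst CCase) (App q s)
              (Lam (App (Cst CInl) (app2 (Cst CPair) (Var 1) (Var 0))))
              (Cst CInr)))
     (Lam (app3 (Cst CCase) (App q s)
              (Lam (App (Cst CInr) (Var 1)))
              (Lam (App (Cst CInr) (app2 (Cst CExmerge) (Var 1) (Var 0))))))"
      using merge_red h s by blast
    have hp: "realIR cty dst dex s B p" and hq: "realIR cty dst dex s C q" using h by blast+
    show "realIR cty dst dex s (Conj B C) (app2 mergeT p q)"
      using hp unfolding realIR_def
    proof (elim disjE exE conjE)
      fix x assume px: "App p s \<leadsto> App (Cst CInl) x" and rx: "real cty dst dex s B x"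
      have xc: "closed x \<and> typing cty [] x (rty B)" using res_props(1)[OF _ _ _ _ px] h s by blast
      have r1: "App (app2 mergeT p q) s \<leadsto> app3 (Cst CCase) (App q s)
              (Lam (App (Cst CInl) (app2 (Cst CPair) x (Var 0)))) (Cst CInr)"
        apply (rule red_trans[OF st])
        apply (rule red_trans[OF case_red[OF px]])
        apply (rule red_step[OF red1.case_inl])
        apply (rule red_step[OF red1.beta])
        using h s xc by (simp add: red_refl)
      from hq show "(\<exists>r. App (app2 mergeT p q) s \<leadsto> App (Cst CInl) r \<and> real cty dst dex s (Conj B C) r) \<or>
         (\<exists>e. App (app2 mergeT p q) s \<leadsto> App (Cst CInr) e \<and> prop_extends dst dex e s)"
        unfolding realIR_def
      proof (elim disjE exE conjE)
        fix y assume qy: "App q s \<leadsto> App (Cst CInl) y" and ry: "real cty dst dex s C y"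
        have r2: "App (app2 mergeT p q) s \<leadsto> App (Cst CInl) (app2 (Cst CPair) x y)"
          apply (rule red_trans[OF r1])
          apply (rule red_trans[OF case_red[OF qy]])
          apply (rule red_step[OF red1.case_inl])
          apply (rule red_step[OF red1.beta])
          using h s xc by (simp add: red_refl)
        have "real cty dst dex s B (App (Cst CFst) (app2 (Cst CPair) x y))"
          using conjunct1[OF real_fr[OF fr_refl]] mk.mFst[OF mk_refl] rx by blast
        moreover have "real cty dst dex s C (App (Cst CSnd) (app2 (Cst CPair) x y))"
          using conjunct1[OF real_fr[OF fr_refl]] mk.mSnd[OF mk_refl] ry by blast
        ultimately show ?thesis using r2 by auto
      next
        fix e assume qe: "App q s \<leadsto> App (Cst CInr) e" and ex: "prop_extends dst dex e s"
        have r2: "App (app2 mergeT p q) s \<leadsto> App (Cst CInr) e"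
          apply (rule red_trans[OF r1])
          apply (rule red_trans[OF case_red[OF qe]])
          apply (rule red_step[OF red1.case_inr])
          by (simp add: red_refl)
        then show ?thesis using ex by blast
      qed
    next
      fix e1 assume pe: "App p s \<leadsto> App (Cst CInr) e1" and ex1: "prop_extends dst dex e1 s"
      have ec1: "closed e1 \<and> typing cty [] e1 TEx" using res_props(2)[OF _ _ _ _ pe] h s by blast
      have r1: "App (app2 mergeT p q) s \<leadsto> app3 (Cst CCase) (App q s)
              (Lam (App (Cst CInr) e1))
              (Lam (App (Cst CInr) (app2 (Cst CExmerge) e1 (Var 0))))"
        apply (rule red_trans[OF st])
        apply (rule red_trans[OF case_red[OF pe]])
        apply (rule red_step[OF red1.case_inr])
        apply (rule red_step[OF red1.beta])
        using h s ec1 by (simp add: red_refl)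
      from hq show "(\<exists>r. App (app2 mergeT p q) s \<leadsto> App (Cst CInl) r \<and> real cty dst dex s (Conj B C) r) \<or>
         (\<exists>e. App (app2 mergeT p q) s \<leadsto> App (Cst CInr) e \<and> prop_extends dst dex e s)"
        unfolding realIR_def
      proof (elim disjE exE conjE)
        fix y assume qy: "App q s \<leadsto> App (Cst CInl) y"
        have yc: "closed y" using res_props(1)[OF _ _ _ _ qy] h s by blast
        have r2: "App (app2 mergeT p q) s \<leadsto> App (Cst CInr) e1"
          apply (rule red_trans[OF r1])
          apply (rule red_trans[OF case_red[OF qy]])
          apply (rule red_step[OF red1.case_inl])
          apply (rule red_step[OF red1.beta])
          using ec1 by (simp add: red_refl)
        then show ?thesis using ex1 by blast
      next
        fix e2 assume qe: "App q s \<leadsto> App (Cst CInr) e2" and ex2: "prop_extends dst dex e2 s"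
        have ec2: "closed e2 \<and> typing cty [] e2 TEx" using res_props(2)[OF _ _ _ _ qe] h s by blast
        have r2: "App (app2 mergeT p q) s \<leadsto> App (Cst CInr) (app2 (Cst CExmerge) e1 e2)"
          apply (rule red_trans[OF r1])
          apply (rule red_trans[OF case_red[OF qe]])
          apply (rule red_step[OF red1.case_inr])
          apply (rule red_step[OF red1.beta])
          using ec1 by (simp add: red_refl)
        have "prop_extends dst dex (app2 (Cst CExmerge) e1 e2) s"
          using EX s ec1 ec2 ex1 ex2 by blast
        then show ?thesis using r2 by blast
      qed
    qed
  qed
qed


end
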